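(* Suppose there exist $r_0>0$ and $C>0$ with $C<\mu/(\epsilon^2\lambda)$ such that $|\nabla\ln T(\mathbf{x})|<C$ for all $|\mathbf{x}|>r_0$, and put $\tilde C=(\mu-\epsilon^2\lambda C)/(\epsilon^2\lambda)>0$. Then there exists $r_1>r_0$ such that $$\mathcal{G}_{\mathbf u}|\mathbf{x}|\le-\frac{\epsilon^2\tilde C}{2}<0\qquad\text{for all }\mathbf{x}\in\mathbb{R}^3\setminus N\text{ with }|\mathbf{x}|>r_1.$$
   Context: Standing setting: fix $\mu>0$, $\lambda>0$, $e\in(0,1)$, $\epsilon\in(0,1]$. For $\mathbf{x}=(x,y,z)\in\mathbb{R}^3$ let $\nu(\mathbf{x})=\frac{\mu}{\lambda^2}\big(|\mathbf{x}|-\frac{x}{e}-\frac{\mathrm{i}y\sqrt{1-e^2}}{e}\big)$, $\sqrt{\cdot}$ the principal branch of the complex square root, $N=\{0\}\cup\{\mathbf{x}:y=0,\ \nu(\mathbf{x})\in[0,4]\}$ (Lebesgue-null), and on $\mathbb{R}^3\setminus N$ $$R_\epsilon(\mathbf{x})=\frac{\lambda}{\epsilon^2}\Big[\ln|\nu|+2\ln\big|1+\sqrt{1-4/\nu}\big|-\frac{\mu|\mathbf{x}|}{\lambda^2}+\tfrac12\operatorname{Re}\big(\nu(1-\sqrt{1-4/\nu})\big)\Big].$$ Let $T\in C^2(\mathbb{R}^3;(0,\infty))$ with $\ln T$ bounded. Set $\rho_\epsilon=T\exp(2R_\epsilon)$, the osmotic velocity $\mathbf{u}=\frac{\epsilon^2}{2}\nabla\ln\rho_\epsilon$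 and $\mathcal{G}_{\mathbf u}=\frac{\epsilon^2}{2}\Delta+\mathbf{u}\cdot\nabla$. *)

theory Defs
  imports "HOL-Analysis.Analysis"
begin

text \<open>Points of R^3 are vectors of type real^3; coordinates (x,y,z) = (v$1, v$2, v$3).\<close>

definition partial :: "3 \<Rightarrow> (real^3 \<Rightarrow> real) \<Rightarrow> real^3 \<Rightarrow> real" where
  "partial i f v = deriv (\<lambda>t. f (v + t *\<^sub>R axis i 1)) 0"

definition grad :: "(real^3 \<Rightarrow> real) \<Rightarrow> real^3 \<Rightarrow> real^3" where
  "grad f v = (\<chi> i. partial i f v)"

definition laplacian :: "(real^3 \<Rightarrow> real) \<Rightarrow> real^3 \<Rightarrow> real" where
  "laplacian f v = (\<Sum>i\<in>UNIV. partial i (partial i f) v)"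

definition C2 :: "(real^3 \<Rightarrow> real) \<Rightarrow> bool" where
  "C2 f \<longleftrightarrow> continuous_on UNIV f \<and>
     (\<forall>i v. ((\<lambda>t. f (v + t *\<^sub>R axis i 1)) has_real_derivative partial i f v) (at 0)) \<and>
     (\<forall>i. continuous_on UNIV (partial i f)) \<and>
     (\<forall>i j v. ((\<lambda>t. partial i f (v + t *\<^sub>R axis j 1)) has_real_derivative partial j (partial i f) v) (at 0)) \<and>
     (\<forall>i j. continuous_on UNIV (partial j (partial i f)))"

definition nu :: "real \<Rightarrow> real \<Rightarrow> real \<Rightarrow> real^3 \<Rightarrow> complex" where
  "nu \<mu> lam e v = complex_of_real (\<mu> / lam\<^sup>2) *
     (complex_of_real (norm v) - complex_of_real (v$1 / e)
      - \<i> * complex_of_real (v$2 * sqrt (1 - e\<^sup>2) / e))"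

definition Nset :: "real \<Rightarrow> real \<Rightarrow> real \<Rightarrow> (real^3) set" where
  "Nset \<mu> lam e = {0} \<union> {v. v$2 = 0 \<and> (\<exists>s\<in>{0..4}. nu \<mu> lam e v = complex_of_real s)}"

definition Reps :: "real \<Rightarrow> real \<Rightarrow> real \<Rightarrow> real \<Rightarrow> real^3 \<Rightarrow> real" where
  "Reps \<mu> lam e \<epsilon> v = (let n = nu \<mu> lam e v in
     lam / \<epsilon>\<^sup>2 * (ln (cmod n) + 2 * ln (cmod (1 + csqrt (1 - 4 / n)))
       - \<mu> * norm v / lam\<^sup>2 + Re (n * (1 - csqrt (1 - 4 / n))) / 2))"

definition rho :: "real \<Rightarrow> real \<Rightarrow> real \<Rightarrow> real \<Rightarrow> (real^3 \<Rightarrow> real) \<Rightarrow> real^3 \<Rightarrow> real" where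
  "rho \<mu> lam e \<epsilon> T v = T v * exp (2 * Reps \<mu> lam e \<epsilon> v)"

definition osm_vel :: "real \<Rightarrow> real \<Rightarrow> real \<Rightarrow> real \<Rightarrow> (real^3 \<Rightarrow> real) \<Rightarrow> real^3 \<Rightarrow> real^3" where
  "osm_vel \<mu> lam e \<epsilon> T v = (\<epsilon>\<^sup>2 / 2) *\<^sub>R grad (\<lambda>w. ln (rho \<mu> lam e \<epsilon> T w)) v"

definition gen :: "real \<Rightarrow> (real^3 \<Rightarrow> real^3) \<Rightarrow> (real^3 \<Rightarrow> real) \<Rightarrow> real^3 \<Rightarrow> real" where
  "gen \<epsilon> u f v = (\<epsilon>\<^sup>2 / 2) * laplacian f v + u v \<bullet> grad f v"

end

theory Submission
  imports Defs
begin

lemma partial_eqI: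
  "((\<lambda>t. f (v + t *\<^sub>R axis i 1)) has_real_derivative D) (at 0) \<Longrightarrow> partial i f v = D"
  unfolding partial_def by (rule DERIV_imp_deriv)

lemma dir_deriv:
  assumes "(f has_derivative f') (at v)"
  shows "((\<lambda>t::real. f (v + t *\<^sub>R h)) has_real_derivative f' h) (at 0)"
proof -
  have l: "linear f'" using assms has_derivative_linear by blast
  have "((\<lambda>t::real. v + t *\<^sub>R h) has_derivative (\<lambda>t. t *\<^sub>R h)) (at 0)"
    by (auto intro!: derivative_eq_intros)
  from has_derivative_compose[OF this] assms
  have "((\<lambda>t. f (v + t *\<^sub>R h)) has_derivative (\<lambda>t. f' (t *\<^sub>R h))) (at 0)" by simp
  moreover have "(\<lambda>t. f' (t *\<^sub>R h)) = (\<lambda>t. t * f' h)"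
    using linear_scale[OF l] by auto
  moreover have "(\<lambda>t. t * f' h) = (*) (f' h)" by (auto simp: mult.commute)
  ultimately show ?thesis by (simp add: has_field_derivative_def)
qed

lemma partial_frechet:
  assumes "(f has_derivative f') (at v)"
  shows "partial i f v = f' (axis i 1)"
  using partial_eqI dir_deriv[OF assms] by blast

lemma sum_partial_frechet:
  assumes "(f has_derivative f') (at (v::real^3))"
  shows "(\<Sum>i\<in>UNIV. partial i f v * w$i) = f' w"
proof -
  have l: "linear f'" using assms has_derivative_linear by blast
  have "f' w = f' (\<Sum>i\<in>UNIV. (w$i) *\<^sub>R axis i 1)"
    using basis_expansion[of w] by (simp add: scalar_mult_eq_scaleR)
  also have "\<dots> = (\<Sum>i\<in>UNIV. w$i * f' (axis i 1))"
    by (simp add: linear_sum[OF l] linear_scale[OF l])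
  finally show ?thesis by (simp add: partial_frechet[OF assms] mult.commute)
qed

lemma norm_hd: "(v::real^3) \<noteq> 0 \<Longrightarrow> (norm has_derivative (\<lambda>h. h \<bullet> v / norm v)) (at v)"
  using has_derivative_norm[of v] by (simp add: sgn_div_norm inner_commute divide_inverse_commute)

lemma partial_norm: "(v::real^3) \<noteq> 0 \<Longrightarrow> partial i norm v = v$i / norm v"
  using partial_frechet[OF norm_hd] by (simp add: inner_axis inner_commute[of "axis i 1"])

lemma dof_real: "f differentiable at v \<Longrightarrow> (\<lambda>w. complex_of_real (f w)) differentiable at v"
  by (rule differentiable_compose[OF of_real_differentiable])
lemma dnth: "(\<lambda>w. w$i) differentiable F"
  by (rule bounded_linear_imp_differentiable) (rule bounded_linear_vec_nth)
lemma dRe: "f differentiable at v \<Longrightarrow> (\<lambda>w. Re (f w)) differentiable at v"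
  by (rule differentiable_compose[OF bounded_linear_imp_differentiable[OF bounded_linear_Re]])
lemma dcmod: "f differentiable at v \<Longrightarrow> f v \<noteq> 0 \<Longrightarrow> (\<lambda>w. cmod (f w)) differentiable at v"
  by (rule differentiable_compose[OF differentiable_norm_at])
lemma dln: fixes f :: "'a::real_normed_vector \<Rightarrow> real" shows "f differentiable at v \<Longrightarrow> f v > 0 \<Longrightarrow> (\<lambda>w. ln (f w)) differentiable at v"
proof -
  assume a: "f differentiable at v" "f v > 0"
  have "ln differentiable at (f v)"
    using DERIV_ln[OF a(2)] field_differentiable_def field_differentiable_imp_differentiable by blast
  then show ?thesis using differentiable_compose[OF _ a(1)] by blast
qed
lemma dcsqrt: "f differentiable at v \<Longrightarrow> f v \<notin> \<real>\<^sub>\<le>\<^sub>0 \<Longrightarrow> (\<lambda>w. csqrt (f w)) differentiable at v"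
  apply (rule differentiable_compose[where f=csqrt])
   apply (rule field_differentiable_imp_differentiable)
  using field_differentiable_at_csqrt by blast+

lemma nu_diff: "(v::real^3) \<noteq> 0 \<Longrightarrow> e \<noteq> 0 \<Longrightarrow> lam \<noteq> 0 \<Longrightarrow> (\<lambda>w. nu \<mu> lam e w) differentiable (at v)"
  unfolding nu_def
  by (intro differentiable_mult differentiable_diff differentiable_const dof_real differentiable_norm_at
      differentiable_divide dnth) auto

lemma Reps_diff:
  assumes "(v::real^3) \<noteq> 0" "e \<noteq> 0" "lam \<noteq> 0" "nu \<mu> lam e v \<noteq> 0" "1 - 4 / nu \<mu> lam e v \<notin> \<real>\<^sub>\<le>\<^sub>0"
    "1 + csqrt (1 - 4 / nu \<mu> lam e v) \<noteq> 0"
  shows "(\<lambda>w. Reps \<mu> lam e \<epsilon> w) differentiable (at v)"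
  unfolding Reps_def Let_def
  by (intro differentiable_mult differentiable_diff differentiable_add differentiable_const dof_real differentiable_norm_at
      differentiable_divide dnth dln dcmod dRe dcsqrt nu_diff assms) (use assms in auto)
lemma Phi_deriv:
  fixes n :: complex
  assumes n: "n \<noteq> 0" and w: "1 - 4/n \<notin> \<real>\<^sub>\<le>\<^sub>0"
  shows "((\<lambda>\<tau>. 2 * Ln (1 + csqrt (1 - 4/((1+\<tau>)*n))) + (1+\<tau>)*n*(1 - csqrt(1 - 4/((1+\<tau>)*n)))/2)
     has_field_derivative (2/(1 + csqrt(1-4/n)) - 1)) (at 0)"
proof -
  define s where "s = csqrt (1 - 4/n)"
  have s2: "s^2 = 1 - 4/n" unfolding s_def by simp
  have s0: "s \<noteq> 0" using w unfolding s_def by (auto simp: csqrt_eq_0)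
  have res: "Re s \<ge> 0" unfolding s_def by (rule Re_csqrt)
  have r1: "1 + s \<notin> \<real>\<^sub>\<le>\<^sub>0" using res by (auto simp: complex_nonpos_Reals_iff)
  have s1: "1 + s \<noteq> 0" using r1 by auto
  have W: "((\<lambda>\<tau>. 1 - 4/((1+\<tau>)*n)) has_field_derivative 4/n) (at 0)"
  proof -
    have G: "((\<lambda>\<tau>. (1+\<tau>)*n) has_field_derivative n) (at 0)"
      by (auto intro!: derivative_eq_intros)
    have "((\<lambda>\<tau>. 1 - 4/((1+\<tau>)*n)) has_field_derivative 0 - (0 * ((1+0)*n) - 4 * n) / (((1+0)*n) * ((1+0)*n))) (at 0)"
      by (rule DERIV_diff[OF DERIV_const DERIV_divide[OF DERIV_const G]]) (use n in simp)
    then show ?thesis using n by (simp add: field_simps)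
  qed
  have S: "((\<lambda>\<tau>. csqrt(1 - 4/((1+\<tau>)*n))) has_field_derivative (4/n)/(2 * s)) (at 0)"
    using has_field_derivative_csqrt'[OF W] w by (simp add: s_def)
  have S1: "((\<lambda>\<tau>. 1 + csqrt(1 - 4/((1+\<tau>)*n))) has_field_derivative (4/n)/(2 * s)) (at 0)"
    using DERIV_add[OF DERIV_const S] by simp
  have L: "((\<lambda>\<tau>. Ln (1 + csqrt(1 - 4/((1+\<tau>)*n)))) has_field_derivative inverse (1+s) * ((4/n)/(2 * s))) (at 0)"
    using DERIV_chain2[OF has_field_derivative_Ln S1] r1 by (simp add: s_def)
  have P: "((\<lambda>\<tau>. (1+\<tau>)*n*(1 - csqrt(1 - 4/((1+\<tau>)*n)))/2) has_field_derivative
      (n * (1 - s) + n * (- ((4/n)/(2 * s)))) / 2) (at 0)"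
  proof -
    have G: "((\<lambda>\<tau>. (1+\<tau>)*n) has_field_derivative n) (at 0)"
      by (auto intro!: derivative_eq_intros)
    have M: "((\<lambda>\<tau>. 1 - csqrt(1 - 4/((1+\<tau>)*n))) has_field_derivative 0 - (4/n)/(2 * s)) (at 0)"
      by (rule DERIV_diff[OF DERIV_const S])
    show ?thesis using DERIV_cdivide[OF DERIV_mult[OF G M], of 2] by (simp add: s_def algebra_simps)
  qed
  have "((\<lambda>\<tau>. 2 * Ln (1 + csqrt (1 - 4/((1+\<tau>)*n))) + (1+\<tau>)*n*(1 - csqrt(1 - 4/((1+\<tau>)*n)))/2)
     has_field_derivative 2 * (inverse (1+s) * ((4/n)/(2 * s))) + (n * (1 - s) + n * (- ((4/n)/(2 * s)))) / 2) (at 0)"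
    by (rule DERIV_add[OF DERIV_cmult[OF L] P])
  moreover have "2 * (inverse (1+s) * ((4/n)/(2 * s))) + (n * (1 - s) + n * (- ((4/n)/(2 * s)))) / 2
     = 2/(1+s) - 1"
  proof -
    have e4: "4/n = (1-s)*(1+s)" using s2 by (simp add: algebra_simps power2_eq_square)
    have b1: "n * (1-s) = 4/(1+s)" using e4 n s1 by (simp add: field_simps)
    have a: "2 * (inverse (1+s) * ((4/n)/(2 * s))) = (1-s)/s" 
    proof -
      have "inverse (1+s) * ((1-s)*(1+s)/(2 * s)) = (inverse (1+s) * (1+s)) * ((1-s)/(2 * s))"
        by (simp only: times_divide_eq_right mult.assoc mult.commute[of "1-s"])
      also have "\<dots> = (1-s)/(2 * s)" using s1 by simp
      finally have X: "inverse (1+s) * ((1-s)*(1+s)/(2 * s)) = (1-s)/(2 * s)" .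
      have "2 * (inverse (1+s) * ((1-s)*(1+s)/(2 * s))) = 2 * ((1-s)/(2 * s))" by (simp only: X)
      also have "\<dots> = (1-s)/s" using s0 by (simp add: field_simps)
      finally show ?thesis unfolding e4 .
    qed
    have b: "n * (- ((4/n)/(2 * s))) = -2/s" using n s0 by (simp add: field_simps)
    have "(1-s)/s + (4/(1+s) + -2/s)/2 = (1-s)/s - 1/s + 2/(1+s)" by (simp add: field_simps)
    also have "(1-s)/s - 1/s = -1" using s0 by (simp add: diff_divide_distrib)
    finally have "(1-s)/s + (4/(1+s) + -2/s)/2 = 2/(1+s) - 1" by simp
    then show ?thesis unfolding a b b1 .
  qed
  ultimately show ?thesis by (simp add: s_def)
qed

lemma Im_nu: "Im (nu \<mu> lam e v) = - (\<mu> / lam\<^sup>2) * (v$2 * sqrt (1 - e\<^sup>2) / e)"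
  unfolding nu_def by simp

lemma nu_real:
  assumes "\<mu> > 0" "lam > 0" "0 < e" "e < 1" "Im (nu \<mu> lam e v) = 0"
  shows "v$2 = 0" "nu \<mu> lam e v = complex_of_real (Re (nu \<mu> lam e v))"
proof -
  have "sqrt (1 - e\<^sup>2) > 0" using assms by (simp add: power_less_one_iff abs_less_iff)
  then show "v$2 = 0" using assms Im_nu[of \<mu> lam e v] by simp
  show "nu \<mu> lam e v = complex_of_real (Re (nu \<mu> lam e v))" using assms(5) by (simp add: complex_eq_iff)
qed

lemma nset_conds:
  assumes "\<mu> > 0" "lam > 0" "0 < e" "e < 1" "v \<notin> Nset \<mu> lam e"
  shows "v \<noteq> 0" "nu \<mu> lam e v \<noteq> 0" "1 - 4 / nu \<mu> lam e v \<notin> \<real>\<^sub>\<le>\<^sub>0"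
proof -
  show "v \<noteq> 0" using assms(5) unfolding Nset_def by auto
  show "nu \<mu> lam e v \<noteq> 0"
  proof
    assume h: "nu \<mu> lam e v = 0"
    then have "v$2 = 0" using nu_real[OF assms(1-4)] by simp
    then have "v \<in> Nset \<mu> lam e" unfolding Nset_def using h by (auto intro!: bexI[of _ 0])
    then show False using assms(5) by simp
  qed
  show "1 - 4 / nu \<mu> lam e v \<notin> \<real>\<^sub>\<le>\<^sub>0"
  proof
    assume h: "1 - 4 / nu \<mu> lam e v \<in> \<real>\<^sub>\<le>\<^sub>0"
    then obtain a where a: "a \<le> 0" "1 - 4 / nu \<mu> lam e v = complex_of_real a"
      by (auto simp: complex_nonpos_Reals_iff complex_eq_iff intro: exI[of _ "Re (1 - 4 / nu \<mu> lam e v)"])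
    have n0: "nu \<mu> lam e v \<noteq> 0" by fact
    have "4 / nu \<mu> lam e v = complex_of_real (1 - a)" using a(2) by (simp add: algebra_simps)
    then have nn: "nu \<mu> lam e v = complex_of_real (4 / (1 - a))" using n0 a(1)
      by (simp add: field_simps)
    then have "Im (nu \<mu> lam e v) = 0" by simp
    then have "v$2 = 0" using nu_real[OF assms(1-4)] by simp
    moreover have "4 / (1 - a) \<in> {0..4}" using a(1) by (auto simp: field_simps)
    ultimately have "v \<in> Nset \<mu> lam e" unfolding Nset_def using nn by blast
    then show False using assms(5) by simp
  qed
qed

lemma Re_comp_deriv:
  assumes "(f has_field_derivative D) (at (complex_of_real x))"
  shows "((\<lambda>t. Re (f (complex_of_real t))) has_real_derivative Re D) (at x)"
proof -
  have o: "(complex_of_real has_derivative complex_of_real) (at x)"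
    by (rule bounded_linear.has_derivative[OF bounded_linear_of_real has_derivative_ident])
  have "((\<lambda>t. f (complex_of_real t)) has_derivative (\<lambda>h. D * complex_of_real h)) (at x)"
    using has_derivative_compose[OF o assms[unfolded has_field_derivative_def]] by simp
  from bounded_linear.has_derivative[OF bounded_linear_Re this]
  have "((\<lambda>t. Re (f (complex_of_real t))) has_derivative (\<lambda>h. Re (D * complex_of_real h))) (at x)" .
  moreover have "(\<lambda>h. Re (D * complex_of_real h)) = (*) (Re D)" by (auto simp: mult.commute)
  ultimately show ?thesis by (simp add: has_field_derivative_def)
qed

lemma nu_scale: "c \<ge> 0 \<Longrightarrow> nu \<mu> lam e (c *\<^sub>R v) = complex_of_real c * nu \<mu> lam e v"
  unfolding nu_def by (simp add: algebra_simps)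

lemma radial:
  assumes "\<mu> > 0" "lam > 0" "0 < e" "e < 1" "v \<notin> Nset \<mu> lam e"
  shows "((\<lambda>t. Reps \<mu> lam e \<epsilon> (v + t *\<^sub>R v)) has_real_derivative
     lam / \<epsilon>\<^sup>2 * (Re (2 / (1 + csqrt (1 - 4 / nu \<mu> lam e v))) - \<mu> * norm v / lam\<^sup>2)) (at 0)"
proof -
  define n where "n = nu \<mu> lam e v"
  define r where "r = norm v"
  note c = nset_conds[OF assms]
  have n0: "n \<noteq> 0" and w: "1 - 4/n \<notin> \<real>\<^sub>\<le>\<^sub>0" using c by (simp_all add: n_def)
  define \<Phi> where "\<Phi> = (\<lambda>\<tau>. 2 * Ln (1 + csqrt (1 - 4/((1+\<tau>)*n))) + (1+\<tau>)*n*(1 - csqrt(1 - 4/((1+\<tau>)*n)))/2)"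
  have P: "(\<Phi> has_field_derivative (2/(1 + csqrt(1-4/n)) - 1)) (at (complex_of_real 0))"
    using Phi_deriv[OF n0 w] by (simp add: \<Phi>_def)
  have R: "((\<lambda>t. Re (\<Phi> (complex_of_real t))) has_real_derivative Re (2/(1 + csqrt(1-4/n)) - 1)) (at 0)"
    by (rule Re_comp_deriv[OF P])
  have L: "((\<lambda>t::real. ln (1+t)) has_real_derivative 1) (at 0)"
    by (auto intro!: derivative_eq_intros)
  have Lin0: "((\<lambda>t::real. \<mu> * ((1+t)*r)) has_real_derivative \<mu> * r) (at 0)"
    by (auto intro!: derivative_eq_intros)
  have Lin: "((\<lambda>t::real. \<mu> * ((1+t)*r) / lam\<^sup>2) has_real_derivative \<mu> * r / lam\<^sup>2) (at 0)"
    by (rule DERIV_cdivide[OF Lin0])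
  have H: "((\<lambda>t. lam/\<epsilon>\<^sup>2 * (ln (1+t) + ln (cmod n) - \<mu> * ((1+t)*r) / lam\<^sup>2 + Re (\<Phi> (complex_of_real t))))
     has_real_derivative lam/\<epsilon>\<^sup>2 * (1 + 0 - \<mu> * r / lam\<^sup>2 + Re (2/(1 + csqrt(1-4/n)) - 1))) (at 0)"
    by (rule DERIV_cmult[OF DERIV_add[OF DERIV_diff[OF DERIV_add[OF L DERIV_const] Lin] R]])
  have ev: "\<forall>\<^sub>F t in nhds 0. Reps \<mu> lam e \<epsilon> (v + t *\<^sub>R v) =
     lam/\<epsilon>\<^sup>2 * (ln (1+t) + ln (cmod n) - \<mu> * ((1+t)*r) / lam\<^sup>2 + Re (\<Phi> (complex_of_real t)))"
  proof -
    have "\<forall>\<^sub>F t in nhds (0::real). t \<in> {-1<..}"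
      by (rule eventually_nhds_in_open) auto
    then show ?thesis
    proof (rule eventually_mono)
      fix t :: real assume "t \<in> {-1<..}"
      then have t: "1 + t > 0" by simp
      define S where "S = csqrt (1 - 4/((1 + complex_of_real t)*n))"
      have vt: "v + t *\<^sub>R v = (1+t) *\<^sub>R v" by (simp add: algebra_simps)
      have nt: "nu \<mu> lam e (v + t *\<^sub>R v) = (1 + complex_of_real t) * n"
        unfolding vt n_def using nu_scale[of "1+t"] t by simp
      have nr: "norm (v + t *\<^sub>R v) = (1+t) * r" unfolding vt r_def using t by simp
      have c1: "ln (cmod ((1 + complex_of_real t) * n)) = ln (1+t) + ln (cmod n)"
      proof -
        have "cmod ((1 + complex_of_real t) * n) = (1+t) * cmod n"
        proof -
          have h1: "cmod (1 + complex_of_real t) = 1 + t" using t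
            by (metis abs_of_pos norm_of_real of_real_1 of_real_add)
          show ?thesis by (simp only: norm_mult h1)
        qed
        then show ?thesis using t n0 by (simp add: ln_mult)
      qed
      have S1: "1 + S \<noteq> 0"
      proof
        assume "1 + S = 0" then have "Re S = -1" by (simp add: complex_eq_iff)
        then show False using Re_csqrt[of "1 - 4/((1 + complex_of_real t)*n)"] by (simp add: S_def)
      qed
      have c2: "ln (cmod (1 + S)) = Re (Ln (1 + S))" using S1 by (simp add: Re_Ln)
      show "Reps \<mu> lam e \<epsilon> (v + t *\<^sub>R v) =
        lam/\<epsilon>\<^sup>2 * (ln (1+t) + ln (cmod n) - \<mu> * ((1+t)*r) / lam\<^sup>2 + Re (\<Phi> (complex_of_real t)))"
        unfolding Reps_def Let_def nt nr c1 \<Phi>_def S_def[symmetric] c2 by (simp add: algebra_simps)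
    qed
  qed
  have "((\<lambda>t. Reps \<mu> lam e \<epsilon> (v + t *\<^sub>R v)) has_real_derivative
     lam/\<epsilon>\<^sup>2 * (1 + 0 - \<mu> * r / lam\<^sup>2 + Re (2/(1 + csqrt(1-4/n)) - 1))) (at 0)"
    using DERIV_cong_ev[OF refl ev refl] H by blast
  then show ?thesis by (simp add: n_def r_def algebra_simps)
qed

lemma ident_nhds: "((\<lambda>x. x) \<longlongrightarrow> a) (nhds a)"
  by (auto simp: tendsto_def eventually_nhds)

lemma lap_norm:
  assumes v: "(v::real^3) \<noteq> 0"
  shows "laplacian norm v = 2 / norm v"
proof -
  have pp: "partial i (partial i norm) v = 1/norm v - (v$i)^2 / norm v^3" for i
  proof -
    define g where "g = (\<lambda>w::real^3. w$i / norm w)"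
    have gd: "(g has_derivative (\<lambda>h. - (v$i) * (inverse (norm v) * (h \<bullet> v / norm v) * inverse (norm v)) + h$i / norm v)) (at v)"
      unfolding g_def
      by (rule has_derivative_divide[OF bounded_linear_imp_has_derivative[OF bounded_linear_vec_nth] norm_hd[OF v]]) (use v in simp)
    have tl: "((\<lambda>t::real. v + t *\<^sub>R axis i 1) \<longlongrightarrow> v) (nhds 0)"
      by (auto intro!: tendsto_eq_intros ident_nhds)
    have ev: "\<forall>\<^sub>F t in nhds 0. partial i norm (v + t *\<^sub>R axis i 1) = g (v + t *\<^sub>R axis i 1)"
      using tendsto_imp_eventually_ne[OF tl v] by eventually_elim (simp add: partial_norm g_def)
    have "((\<lambda>t. partial i norm (v + t *\<^sub>R axis i 1)) has_real_derivative
       - (v$i) * (inverse (norm v) * (axis i 1 \<bullet> v / norm v) * inverse (norm v)) + (axis i 1::real^3)$i / norm v) (at 0)"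
      using DERIV_cong_ev[OF refl ev refl] dir_deriv[OF gd] by blast
    then have "partial i (partial i norm) v =
       - (v$i) * (inverse (norm v) * (axis i 1 \<bullet> v / norm v) * inverse (norm v)) + (axis i 1::real^3)$i / norm v"
      by (rule partial_eqI)
    also have "\<dots> = 1/norm v - (v$i)^2 / norm v^3"
      by (simp add: inner_axis' field_simps power2_eq_square power3_eq_cube)
    finally show ?thesis .
  qed
  have sq: "(\<Sum>i\<in>UNIV. (v$i)^2) = norm v ^ 2"
  proof -
    have "norm v ^ 2 = v \<bullet> v" by (rule power2_norm_eq_inner)
    also have "\<dots> = (\<Sum>i\<in>UNIV. (v$i)^2)" unfolding inner_vec_def by (simp add: power2_eq_square)
    finally show ?thesis by simp
  qed
  have "laplacian norm v = (\<Sum>i\<in>UNIV. 1/norm v - (v$i)^2 / norm v^3)"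
    unfolding laplacian_def using pp by simp
  also have "\<dots> = 3 / norm v - norm v^2 / norm v^3"
    by (simp add: sum_subtractf sum_divide_distrib[symmetric] sq)
  also have "\<dots> = 2 / norm v" using v by (simp add: field_simps power2_eq_square power3_eq_cube)
  finally show ?thesis .
qed

lemma Re_bound: "Re (2 / (1 + csqrt z)) \<le> 2"
proof -
  have r: "Re (1 + csqrt z) \<ge> 1" using Re_csqrt[of z] by simp
  then have c: "cmod (1 + csqrt z) \<ge> 1" using complex_Re_le_cmod order_trans by blast
  have "Re (2 / (1 + csqrt z)) \<le> cmod (2 / (1 + csqrt z))" by (rule complex_Re_le_cmod)
  also have "\<dots> = 2 / cmod (1 + csqrt z)" by (simp add: norm_divide)
  also have "\<dots> \<le> 2" using c by (simp add: divide_le_eq)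
  finally show ?thesis .
qed

lemma csqrt_plus1_ne: "1 + csqrt z \<noteq> 0"
proof
  assume "1 + csqrt z = 0" then have "Re (csqrt z) = -1" by (simp add: complex_eq_iff)
  then show False using Re_csqrt[of z] by simp
qed

theorem lemma7p3:
  fixes \<mu> lam e \<epsilon> r0 C :: real and T :: "real^3 \<Rightarrow> real"
  assumes "\<mu> > 0" "lam > 0" "0 < e" "e < 1" "0 < \<epsilon>" "\<epsilon> \<le> 1"
    and "C2 T" "\<forall>v. T v > 0" "\<exists>B. \<forall>v. \<bar>ln (T v)\<bar> \<le> B"
    and "r0 > 0" "C > 0" "C < \<mu> / (\<epsilon>\<^sup>2 * lam)"
    and "\<forall>v. norm v > r0 \<longrightarrow> norm (grad (\<lambda>w. ln (T w)) v) < C"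
  shows "\<exists>r1 > r0. \<forall>v. v \<notin> Nset \<mu> lam e \<and> norm v > r1 \<longrightarrow>
     gen \<epsilon> (osm_vel \<mu> lam e \<epsilon> T) norm v
       \<le> - (\<epsilon>\<^sup>2 * ((\<mu> - \<epsilon>\<^sup>2 * lam * C) / (\<epsilon>\<^sup>2 * lam)) / 2)
     \<and> - (\<epsilon>\<^sup>2 * ((\<mu> - \<epsilon>\<^sup>2 * lam * C) / (\<epsilon>\<^sup>2 * lam)) / 2) < 0"
proof -
  have mu: "\<mu> > 0" and lam: "lam > 0" and eps: "\<epsilon> > 0" using assms by auto
  have eps2: "\<epsilon>\<^sup>2 > 0" using eps by simp
  define K0 where "K0 = 2 * lam * (\<epsilon>\<^sup>2 + 2 * lam) / \<mu>"
  define r1 where "r1 = max r0 K0 + 1"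
  have Cb: "\<epsilon>\<^sup>2 * lam * C < \<mu>" using assms(12) eps2 lam by (simp add: field_simps)
  have neg: "- (\<epsilon>\<^sup>2 * ((\<mu> - \<epsilon>\<^sup>2 * lam * C) / (\<epsilon>\<^sup>2 * lam)) / 2) < 0"
  proof -
    have "(\<mu> - \<epsilon>\<^sup>2 * lam * C) / (\<epsilon>\<^sup>2 * lam) > 0" using Cb eps2 lam by (simp add: divide_pos_pos)
    then have "\<epsilon>\<^sup>2 * ((\<mu> - \<epsilon>\<^sup>2 * lam * C) / (\<epsilon>\<^sup>2 * lam)) > 0" using eps2 by (rule mult_pos_pos[rotated])
    moreover have "\<And>x::real. 0 < x \<Longrightarrow> - (x / 2) < 0" by simp
    ultimately show ?thesis by blast
  qed
  have target: "- (\<epsilon>\<^sup>2 * ((\<mu> - \<epsilon>\<^sup>2 * lam * C) / (\<epsilon>\<^sup>2 * lam)) / 2) = - \<mu> / (2 * lam) + \<epsilon>\<^sup>2 * C / 2"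
    using eps2 lam by (simp add: field_simps)
  have Tpos: "\<And>w. T w > 0" using assms(8) by auto
  have Tne: "\<And>w. T w \<noteq> 0" using Tpos by (metis less_irrefl)
  have Tder: "\<And>i w. ((\<lambda>t. T (w + t *\<^sub>R axis i 1)) has_real_derivative partial i T w) (at 0)"
    using assms(7) unfolding C2_def by blast
  have main: "gen \<epsilon> (osm_vel \<mu> lam e \<epsilon> T) norm v \<le> - \<mu> / (2 * lam) + \<epsilon>\<^sup>2 * C / 2"
    if vN: "v \<notin> Nset \<mu> lam e" and vr: "norm v > r1" for v
  proof -
    note c = nset_conds[OF mu lam assms(3,4) vN]
    define r where "r = norm v"
    have r0r: "r > r0" and rK: "r > K0" using vr by (auto simp: r_def r1_def)
    have rpos: "r > 0" using r0r assms(10) by simp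
    define s where "s = csqrt (1 - 4 / nu \<mu> lam e v)"
    obtain R' where Rd: "(Reps \<mu> lam e \<epsilon> has_derivative R') (at v)"
      using Reps_diff[OF c(1) _ _ c(2) c(3) csqrt_plus1_ne] assms(3) lam
      unfolding differentiable_def by fastforce
    define K where "K = lam / \<epsilon>\<^sup>2 * (Re (2 / (1 + s)) - \<mu> * r / lam\<^sup>2)"
    have RK: "R' v = K"
      using DERIV_unique[OF dir_deriv[OF Rd, of v] radial[OF mu lam assms(3,4) vN, of \<epsilon>]]
      by (simp add: K_def s_def r_def)
    have lnTd: "((\<lambda>t. ln (T (v + t *\<^sub>R axis i 1))) has_real_derivative partial i (\<lambda>w. ln (T w)) v) (at 0)" for i
    proof -
      have "((\<lambda>t. ln (T (v + t *\<^sub>R axis i 1))) has_real_derivative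
         inverse (T (v + 0 *\<^sub>R axis i 1)) * partial i T v) (at 0)"
        by (rule DERIV_chain2[OF DERIV_ln[OF Tpos] Tder])
      moreover have "partial i (\<lambda>w. ln (T w)) v = inverse (T (v + 0 *\<^sub>R axis i 1)) * partial i T v"
        using calculation by (rule partial_eqI)
      ultimately show ?thesis by simp
    qed
    have lnrho: "(\<lambda>w. ln (rho \<mu> lam e \<epsilon> T w)) = (\<lambda>w. ln (T w) + 2 * Reps \<mu> lam e \<epsilon> w)"
      by (rule ext) (simp add: rho_def ln_mult Tne)
    have pr: "partial i (\<lambda>w. ln (rho \<mu> lam e \<epsilon> T w)) v = partial i (\<lambda>w. ln (T w)) v + 2 * partial i (Reps \<mu> lam e \<epsilon>) v" for i
    proof -
      have "((\<lambda>t. ln (T (v + t *\<^sub>R axis i 1)) + 2 * Reps \<mu> lam e \<epsilon> (v + t *\<^sub>R axis i 1)) has_real_derivative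
          partial i (\<lambda>w. ln (T w)) v + 2 * R' (axis i 1)) (at 0)"
        by (rule DERIV_add[OF lnTd DERIV_cmult[OF dir_deriv[OF Rd]]])
      then have "partial i (\<lambda>w. ln (T w) + 2 * Reps \<mu> lam e \<epsilon> w) v = partial i (\<lambda>w. ln (T w)) v + 2 * R' (axis i 1)"
        by (rule partial_eqI)
      then show ?thesis unfolding lnrho partial_frechet[OF Rd] .
    qed
    define G where "G = grad (\<lambda>w. ln (T w)) v \<bullet> v"
    have G: "G \<le> C * r"
    proof -
      have "G \<le> norm (grad (\<lambda>w. ln (T w)) v) * norm v" unfolding G_def by (rule norm_cauchy_schwarz)
      also have "\<dots> \<le> C * r" using assms(13) r0r rpos by (auto simp: r_def intro!: mult_right_mono less_imp_le)
      finally show ?thesis .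
    qed
    have sumeq: "(\<Sum>i\<in>UNIV. partial i (\<lambda>w. ln (rho \<mu> lam e \<epsilon> T w)) v * v$i) = G + 2 * K"
    proof -
      have "(\<Sum>i\<in>UNIV. partial i (\<lambda>w. ln (rho \<mu> lam e \<epsilon> T w)) v * v$i)
         = (\<Sum>i\<in>UNIV. partial i (\<lambda>w. ln (T w)) v * v$i) + 2 * (\<Sum>i\<in>UNIV. partial i (Reps \<mu> lam e \<epsilon>) v * v$i)"
        by (simp add: pr algebra_simps sum.distrib sum_distrib_left)
      also have "(\<Sum>i\<in>UNIV. partial i (\<lambda>w. ln (T w)) v * v$i) = G"
        unfolding G_def grad_def inner_vec_def by simp
      also have "(\<Sum>i\<in>UNIV. partial i (Reps \<mu> lam e \<epsilon>) v * v$i) = K"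
        using sum_partial_frechet[OF Rd, of v] RK by simp
      finally show ?thesis .
    qed
    have gen_eq: "gen \<epsilon> (osm_vel \<mu> lam e \<epsilon> T) norm v = \<epsilon>\<^sup>2 / r + (\<epsilon>\<^sup>2 / 2) * (G + 2 * K) / r"
    proof -
      have "osm_vel \<mu> lam e \<epsilon> T v \<bullet> grad norm v
          = (\<Sum>i\<in>UNIV. (\<epsilon>\<^sup>2 / 2) * partial i (\<lambda>w. ln (rho \<mu> lam e \<epsilon> T w)) v * (v$i / r))"
        unfolding osm_vel_def grad_def inner_vec_def using partial_norm[OF c(1)] by (simp add: r_def)
      also have "\<dots> = (\<epsilon>\<^sup>2 / 2) / r * (\<Sum>i\<in>UNIV. partial i (\<lambda>w. ln (rho \<mu> lam e \<epsilon> T w)) v * v$i)"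
        by (simp add: sum_distrib_left mult_ac)
      finally have "osm_vel \<mu> lam e \<epsilon> T v \<bullet> grad norm v = (\<epsilon>\<^sup>2 / 2) * (G + 2 * K) / r"
        unfolding sumeq by simp
      then show ?thesis unfolding gen_def lap_norm[OF c(1)] r_def[symmetric] by simp
    qed
    have ReX: "Re (2 / (1 + s)) \<le> 2" unfolding s_def by (rule Re_bound)
    have eK: "\<epsilon>\<^sup>2 * K = lam * Re (2 / (1 + s)) - \<mu> * r / lam"
    proof -
      have a: "\<epsilon>\<^sup>2 * K = lam * (Re (2 / (1 + s)) - \<mu> * r / lam\<^sup>2)" unfolding K_def using eps2 by simp
      have b: "lam * (\<mu> * r / lam\<^sup>2) = \<mu> * r / lam" using lam by (simp add: power2_eq_square)
      show ?thesis unfolding a right_diff_distrib b ..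
    qed
    have "\<epsilon>\<^sup>2 / r + (\<epsilon>\<^sup>2 / 2) * (G + 2 * K) / r = \<epsilon>\<^sup>2 / r + \<epsilon>\<^sup>2 * G / (2 * r) + (\<epsilon>\<^sup>2 * K) / r"
      using rpos by (simp add: field_simps)
    also have "\<dots> = \<epsilon>\<^sup>2 / r + \<epsilon>\<^sup>2 * G / (2 * r) + lam * Re (2 / (1 + s)) / r - \<mu> / lam"
      unfolding eK using rpos by (simp add: field_simps)
    also have "\<dots> \<le> \<epsilon>\<^sup>2 / r + \<epsilon>\<^sup>2 * C / 2 + 2 * lam / r - \<mu> / lam"
    proof -
      have "\<epsilon>\<^sup>2 * G / (2 * r) \<le> \<epsilon>\<^sup>2 * C / 2"
        using G rpos eps2 by (simp add: divide_le_eq field_simps)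
      moreover have "lam * Re (2 / (1 + s)) / r \<le> 2 * lam / r"
        using ReX rpos lam by (simp add: divide_right_mono)
      ultimately show ?thesis by linarith
    qed
    also have "\<dots> \<le> - \<mu> / (2 * lam) + \<epsilon>\<^sup>2 * C / 2"
    proof -
      have "K0 * \<mu> = 2 * lam * (\<epsilon>\<^sup>2 + 2 * lam)" unfolding K0_def using mu by simp
      moreover have "K0 * \<mu> \<le> r * \<mu>" using rK mu by (simp add: mult_right_mono)
      ultimately have "2 * lam * (\<epsilon>\<^sup>2 + 2 * lam) \<le> r * \<mu>" by simp
      then have "(\<epsilon>\<^sup>2 + 2 * lam) / r \<le> \<mu> / (2 * lam)" using rpos lam
        by (simp add: field_simps)
      moreover have "\<epsilon>\<^sup>2 / r + 2 * lam / r = (\<epsilon>\<^sup>2 + 2 * lam) / r" by (simp add: add_divide_distrib)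
      moreover have "\<mu> / lam = \<mu> / (2 * lam) + \<mu> / (2 * lam)" using lam by (simp add: field_simps)
      ultimately show ?thesis by linarith
    qed
    finally show ?thesis unfolding gen_eq .
  qed
  show ?thesis
    apply (rule exI[of _ r1])
    using main neg target assms(10) by (auto simp: r1_def)
qed
end
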